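(* Fix $\alpha\in(0,1)$ and let $\mathcal{D}_\alpha=\{d\in(0,\min\{(1-\alpha)\varphi_{\max},\psi_{\max}\}): \psi_\alpha^{-1}(d)<s_{\rm in}\}$, where $$\psi_\alpha^{-1}(d)=\varphi^{-1}\!\left(\frac{d}{1-\alpha}\right)+\frac{\psi^{-1}(d)}{\alpha\beta\gamma}.$$ Then $\mathcal D_\alpha$ is an interval (of the form $(0,\psi_\alpha(s_{\rm in}))$), $f_0^*(\alpha,d)=\big(s_{\rm in}-\psi_\alpha^{-1}(d)\big)\dfrac{\alpha\beta\gamma\, d}{\mu^{-1}(d)}>0$ on $\mathcal D_\alpha$, and $d\mapsto f_0^*(\alpha,d)$ is strictly log-concave on $\mathcal D_\alpha$.
   Context: All parameters $s_{\rm in},\gamma,\beta,\varphi_{\max},k_s,\rho_{\max},k_v,q_{\min},\mu_{\max}$ are strictly positive. $\varphi(s)=\frac{\varphi_{\max}s}{k_s+s}$, $\rho(v)=\frac{\rho_{\max}v}{k_v+v}$ on $[0,\infty)$, $\mu(q)=\mu_{\max}(1-q_{\min}/q)$ on $[q_{\min},\infty)$, with inverses $\varphi^{-1}:[0,\varphi_{\max})\to[0,\infty)$, $\mu^{-1}:[0,\mu_{\max})\to[q_{\min},\infty)$, $\rho^{-1}:[0,\rho_{\max})\to[0,\infty)$. $\psi_{\max}=\frac{\mu_{\max}\rho_{\max}}{\rho_{\max}+q_{\min}\mu_{\max}}$ and $\psi^{-1}(y)=\rho^{-1}(y\,\mu^{-1}(y))$ for $y\in[0,\psi_{\max})$. $f_0^*(\alpha,d)=\frac{d\,(v_{\rm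 in}^*(\alpha,d)-\psi^{-1}(d))}{\mu^{-1}(d)}$ with $v_{\rm in}^*(\alpha,d)=\alpha\beta\gamma\big(s_{\rm in}-\varphi^{-1}(d/(1-\alpha))\big)$. *)

theory Defs
  imports "HOL-Analysis.Analysis"
begin

definition strict_concave_on :: "real set \<Rightarrow> (real \<Rightarrow> real) \<Rightarrow> bool" where
  "strict_concave_on S f \<longleftrightarrow>
     (\<forall>x\<in>S. \<forall>y\<in>S. x \<noteq> y \<longrightarrow> (\<forall>t. 0 < t \<and> t < 1 \<longrightarrow>
        f ((1 - t) * x + t * y) > (1 - t) * f x + t * f y))"

(* Inverses of phi(s) = phimax s/(ks+s), rho(v) = rhomax v/(kv+v),
   mu(q) = mumax (1 - qmin/q), written in closed form on their ranges. *)
definition phi_inv :: "real \<Rightarrow> real \<Rightarrow> real \<Rightarrow> real" where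
  "phi_inv phimax ks y = ks * y / (phimax - y)"

definition rho_inv :: "real \<Rightarrow> real \<Rightarrow> real \<Rightarrow> real" where
  "rho_inv rhomax kv y = kv * y / (rhomax - y)"

definition mu_inv :: "real \<Rightarrow> real \<Rightarrow> real \<Rightarrow> real" where
  "mu_inv qmin mumax y = qmin * mumax / (mumax - y)"

definition psi_max :: "real \<Rightarrow> real \<Rightarrow> real \<Rightarrow> real" where
  "psi_max rhomax qmin mumax = mumax * rhomax / (rhomax + qmin * mumax)"

definition psi_inv :: "real \<Rightarrow> real \<Rightarrow> real \<Rightarrow> real \<Rightarrow> real \<Rightarrow> real" where
  "psi_inv rhomax kv qmin mumax y = rho_inv rhomax kv (y * mu_inv qmin mumax y)"

definition v_in_star ::
  "real \<Rightarrow> real \<Rightarrow> real \<Rightarrow> real \<Rightarrow> real \<Rightarrow> real \<Rightarrow> real \<Rightarrow> real" where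
  "v_in_star s_in gamma beta phimax ks alpha d =
     alpha * beta * gamma * (s_in - phi_inv phimax ks (d / (1 - alpha)))"

definition f0_star ::
  "real \<Rightarrow> real \<Rightarrow> real \<Rightarrow> real \<Rightarrow> real \<Rightarrow> real \<Rightarrow> real \<Rightarrow> real \<Rightarrow> real \<Rightarrow>
   real \<Rightarrow> real \<Rightarrow> real" where
  "f0_star s_in gamma beta phimax ks rhomax kv qmin mumax alpha d =
     d * (v_in_star s_in gamma beta phimax ks alpha d - psi_inv rhomax kv qmin mumax d)
       / mu_inv qmin mumax d"

definition psi_alpha_inv ::
  "real \<Rightarrow> real \<Rightarrow> real \<Rightarrow> real \<Rightarrow> real \<Rightarrow> real \<Rightarrow> real \<Rightarrow> real \<Rightarrow>
   real \<Rightarrow> real \<Rightarrow> real" where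
  "psi_alpha_inv gamma beta phimax ks rhomax kv qmin mumax alpha d =
     phi_inv phimax ks (d / (1 - alpha))
       + psi_inv rhomax kv qmin mumax d / (alpha * beta * gamma)"

definition D_alpha ::
  "real \<Rightarrow> real \<Rightarrow> real \<Rightarrow> real \<Rightarrow> real \<Rightarrow> real \<Rightarrow> real \<Rightarrow> real \<Rightarrow> real \<Rightarrow>
   real \<Rightarrow> real set" where
  "D_alpha s_in gamma beta phimax ks rhomax kv qmin mumax alpha =
     {d. 0 < d \<and> d < min ((1 - alpha) * phimax) (psi_max rhomax qmin mumax) \<and>
         psi_alpha_inv gamma beta phimax ks rhomax kv qmin mumax alpha d < s_in}"

end

theory Submission imports Defs begin

lemma ln_lt_minus_one: fixes u::real assumes "0 < u" "u \<noteq> 1" shows "ln u < u - 1"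
proof -
  have "1 - (1 - u) < exp (-(1-u))" using assms exp_minus_greater[of "1-u"] by simp
  then have "u < exp (u - 1)" by simp
  then show ?thesis using assms by (metis ln_exp ln_less_cancel_iff exp_gt_zero)
qed

lemma ln_strict_conc:
  fixes x y t :: real
  assumes "0 < x" "0 < y" "x \<noteq> y" "0 < t" "t < 1"
  shows "(1-t)*ln x + t*ln y < ln ((1-t)*x+t*y)"
proof -
  define z where "z = (1-t)*x+t*y"
  have z: "0 < z" unfolding z_def using assms by (simp add: add_pos_pos)
  have xz: "x \<noteq> z" unfolding z_def using assms by (auto simp: algebra_simps)
  have "ln (x/z) < x/z - 1" using ln_lt_minus_one[of "x/z"] z assms xz by auto
  then have 1: "ln x - ln z < x/z - 1" using z assms by (simp add: ln_div)
  have "ln (y/z) \<le> y/z - 1" using ln_le_minus_one[of "y/z"] z assms by auto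
  then have 2: "ln y - ln z \<le> y/z - 1" using z assms by (simp add: ln_div)
  have "(1-t)*(ln x - ln z) + t*(ln y - ln z) < (1-t)*(x/z - 1) + t*(y/z-1)"
    using 1 2 assms by (intro add_less_le_mono) (auto intro: mult_strict_left_mono mult_left_mono)
  also have "\<dots> = 0" using z by (simp add: z_def field_simps)
  finally show ?thesis unfolding z_def[symmetric] by (simp add: algebra_simps)
qed

lemma ln_conc:
  fixes x y t :: real
  assumes "0 < x" "0 < y" "0 \<le> t" "t \<le> 1"
  shows "(1-t)*ln x + t*ln y \<le> ln ((1-t)*x+t*y)"
  using concave_onD[OF ln_concave, of t x y] assms by (simp add: concave_on_iff)

lemma h_mono: fixes k x x' p :: real assumes "0 < k" "x < x'" "x' < p" "0 < p" shows "k*x/(p-x) < k*x'/(p-x')"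
proof -
  have "x*p < x'*p" using assms by (simp add: mult_strict_right_mono)
  then have "x*(p-x') < x'*(p-x)" using assms by (simp add: algebra_simps)
  then show ?thesis using assms by (simp add: divide_simps)
qed

lemma h_mono_le: fixes k x x' p :: real assumes "0 \<le> k" "x \<le> x'" "x' < p" "0 < p" shows "k*x/(p-x) \<le> k*x'/(p-x')"
  using h_mono[of k x x' p] assms by (cases "k = 0 \<or> x = x'") (auto simp: less_eq_real_def)

lemma h_conv:
  fixes k p x y t :: real
  assumes "0 \<le> k" "x < p" "y < p" "0 \<le> t" "t \<le> 1" "0 < p"
  shows "k*((1-t)*x+t*y)/(p-((1-t)*x+t*y)) \<le> (1-t)*(k*x/(p-x)) + t*(k*y/(p-y))"
proof -
  have ci: "convex_on {0<..} (inverse::real\<Rightarrow>real)" by (rule convex_on_inverse) auto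
  have "inverse ((1-t)*(p-x) + t*(p-y)) \<le> (1-t)*inverse (p-x) + t*inverse(p-y)"
    using convex_onD[OF ci, of t "p-x" "p-y"] assms by simp
  moreover have "(1-t)*(p-x) + t*(p-y) = p - ((1-t)*x+t*y)" by (simp add: algebra_simps)
  ultimately have I: "1/(p - ((1-t)*x+t*y)) \<le> (1-t)/(p-x) + t/(p-y)" by (simp add: divide_inverse)
  have pz: "(1-t)*x+t*y < p"
  proof -
    have "(1-t)*x \<le> (1-t)*p" "t*y \<le> t*p" using assms by (auto intro: mult_left_mono)
    moreover have "t*y < t*p \<or> (1-t)*x < (1-t)*p" using assms
      by (cases "t = 0") (auto intro: mult_strict_left_mono)
    ultimately show ?thesis by (auto simp: algebra_simps)
  qed
  have e: "\<And>w. w < p \<Longrightarrow> k*w/(p-w) = k*p*(1/(p-w)) - k" by (simp add: field_simps)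
  have "k*p*(1/(p - ((1-t)*x+t*y))) \<le> k*p*((1-t)/(p-x) + t/(p-y))"
    using I assms by (intro mult_left_mono) auto
  then have "k*p*(1/(p - ((1-t)*x+t*y))) - k \<le> (1-t)*(k*p*(1/(p-x)) - k) + t*(k*p*(1/(p-y)) - k)"
    by (simp add: algebra_simps)
  then show ?thesis unfolding e[OF pz] e[OF assms(2)] e[OF assms(3)] .
qed
lemma conv_lt: fixes x y t p :: real assumes "x < p" "y < p" "0 \<le> t" "t \<le> 1"
  shows "(1-t)*x+t*y < p"
proof -
  have "(1-t)*x \<le> (1-t)*p" "t*y \<le> t*p" using assms by (auto intro: mult_left_mono)
  moreover have "t*y < t*p \<or> (1-t)*x < (1-t)*p" using assms
    by (cases "t = 0") (auto intro: mult_strict_left_mono)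
  ultimately show ?thesis by (auto simp: algebra_simps)
qed

theorem lemma2:
  fixes s_in gamma beta phimax ks rhomax kv qmin mumax alpha :: real
  assumes "0 < s_in" "0 < gamma" "0 < beta" "0 < phimax" "0 < ks"
    "0 < rhomax" "0 < kv" "0 < qmin" "0 < mumax"
    and "0 < alpha" "alpha < 1"
  defines "D \<equiv> D_alpha s_in gamma beta phimax ks rhomax kv qmin mumax alpha"
    and "f \<equiv> f0_star s_in gamma beta phimax ks rhomax kv qmin mumax alpha"
  shows "(\<exists>c. 0 < c \<and> c < min ((1 - alpha) * phimax) (psi_max rhomax qmin mumax) \<and>
              psi_alpha_inv gamma beta phimax ks rhomax kv qmin mumax alpha c = s_in \<and>
              D = {0<..<c})
     \<and> (\<forall>d\<in>D. f d = (s_in - psi_alpha_inv gamma beta phimax ks rhomax kv qmin mumax alpha d)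
                       * (alpha * beta * gamma * d / mu_inv qmin mumax d)
               \<and> 0 < f d)
     \<and> strict_concave_on D (\<lambda>d. ln (f d))"
proof -
  note pos = assms(1-11)
  define a where "a = 1 - alpha"
  define K where "K = alpha * beta * gamma"
  define PM where "PM = psi_max rhomax qmin mumax"
  define M where "M = min (a * phimax) PM"
  define g where "g = psi_alpha_inv gamma beta phimax ks rhomax kv qmin mumax alpha"
  define Y where "Y = (\<lambda>d. d * mu_inv qmin mumax d)"
  define s where "s = s_in"
  have a: "0 < a" using pos by (simp add: a_def)
  have K: "0 < K" using pos by (simp add: K_def)
  have PMm: "PM < mumax" "0 < PM" using pos unfolding PM_def psi_max_def
    by (auto simp: divide_simps add_pos_pos)
  have M: "0 < M" using a PMm pos by (simp add: M_def)
  have geq: "g d = ks * (d/a) / (phimax - d/a) + kv * Y d / (rhomax - Y d) / K" for d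
    by (simp add: g_def psi_alpha_inv_def phi_inv_def psi_inv_def rho_inv_def Y_def a_def K_def)
  have Yeq: "Y d = (qmin*mumax) * d / (mumax - d)" for d by (simp add: Y_def mu_inv_def)
  have dom: "d/a < phimax \<and> d < mumax \<and> 0 \<le> Y d \<and> Y d < rhomax" if "0 \<le> d" "d < M" for d
  proof -
    have "d < a * phimax" "d < PM" using that by (auto simp: M_def)
    then have 1: "d/a < phimax" using a by (simp add: divide_simps mult.commute)
    have 2: "d < mumax" using \<open>d < PM\<close> PMm by simp
    have 3: "0 \<le> Y d" using 2 that pos by (simp add: Yeq)
    have "d * (rhomax + qmin*mumax) < mumax * rhomax"
      using \<open>d < PM\<close> pos unfolding PM_def psi_max_def by (simp add: divide_simps add_pos_pos)
    then have "qmin*mumax*d < rhomax * (mumax - d)" by (simp add: algebra_simps)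
    then have 4: "Y d < rhomax" using 2 by (simp add: Yeq divide_simps)
    show ?thesis using 1 2 3 4 by blast
  qed
  have h0: "g 0 = 0" by (simp add: geq Yeq)
  have gmono: "g x < g x'" if "0 \<le> x" "x < x'" "x' < M" for x x'
  proof -
    have dx: "x/a < phimax \<and> x < mumax \<and> 0 \<le> Y x \<and> Y x < rhomax" using dom that by simp
    have dx': "x'/a < phimax \<and> x' < mumax \<and> 0 \<le> Y x' \<and> Y x' < rhomax" using dom that by simp
    have "x/a < x'/a" using that a by (simp add: divide_strict_right_mono)
    then have 1: "ks * (x/a) / (phimax - x/a) < ks * (x'/a) / (phimax - x'/a)"
      using h_mono[of ks "x/a" "x'/a" phimax] dx' pos by simp
    have "Y x \<le> Y x'" unfolding Yeq using h_mono_le[of "qmin*mumax" x x' mumax] dx' pos that by simp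
    then have "kv * Y x / (rhomax - Y x) \<le> kv * Y x' / (rhomax - Y x')"
      using h_mono_le[of kv "Y x" "Y x'" rhomax] dx' pos by simp
    then have 2: "kv * Y x / (rhomax - Y x) / K \<le> kv * Y x' / (rhomax - Y x') / K"
      using K by (intro divide_right_mono) auto
    show ?thesis using 1 2 by (simp add: geq)
  qed
  have gmono_le: "g x \<le> g x'" if "0 \<le> x" "x \<le> x'" "x' < M" for x x'
    using gmono[of x x'] that by (cases "x = x'") auto
  \<comment> \<open>point where g exceeds s\<close>
  define x1 where "x1 = s*phimax/(ks+s)"
  define d1 where "d1 = a * x1"
  define y2 where "y2 = rhomax * (K * s) / (kv + K * s)"
  define d2 where "d2 = y2*mumax/(qmin*mumax+y2)"
  have sp: "0 < s" using pos by (simp add: s_def)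
  have Ks: "0 < K * s" "0 < kv + K * s" using sp K pos by (simp_all add: add_pos_pos)
  have x1: "0 < x1" "x1 < phimax" using sp pos by (auto simp: x1_def divide_simps)
  have d1: "0 < d1" "d1 < a*phimax" using x1 a by (auto simp: d1_def)
  have "d1/a = x1" using a by (simp add: d1_def)
  moreover have "phimax - x1 = ks*phimax/(ks+s)" using sp pos by (simp add: x1_def field_simps)
  moreover have "ks * x1 / (ks*phimax/(ks+s)) = s"
  proof -
    have "0 < ks+s" using sp pos by simp
    then have "ks * x1 / (ks*phimax/(ks+s)) = ks * x1 * (ks+s) / (ks*phimax)" by simp
    also have "ks * x1 * (ks+s) = ks*(s*phimax)" using \<open>0 < ks+s\<close> by (simp add: x1_def)
    finally show ?thesis using pos by simp
  qed
  ultimately have phi1: "ks * (d1/a) / (phimax - d1/a) = s" by simp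
  have y2: "0 < y2" "y2 < rhomax" using sp pos K Ks by (auto simp: y2_def divide_simps)
  have d2: "0 < d2" using y2 pos by (auto simp: d2_def intro!: divide_pos_pos add_pos_pos)
  have "y2 * mumax * (rhomax + qmin * mumax) < mumax * rhomax * (qmin*mumax+y2)"
  proof -
    have "y2 * (qmin*mumax*mumax) < rhomax * (qmin*mumax*mumax)" using y2 pos by simp
    then show ?thesis by (simp add: algebra_simps)
  qed
  then have d2PM: "d2 < PM" using y2 pos unfolding d2_def PM_def psi_max_def
    by (simp add: divide_simps add_pos_pos)
  have Yd2: "Y d2 = y2"
  proof -
    have den: "0 < qmin*mumax+y2" using y2 pos by (simp add: add_pos_pos)
    have e1: "mumax - d2 = qmin*mumax*mumax/(qmin*mumax+y2)" using den by (simp add: d2_def field_simps)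
    have e2: "qmin*mumax*d2 = y2 * (qmin*mumax*mumax/(qmin*mumax+y2))" using den by (simp add: d2_def field_simps)
    have "qmin*mumax*mumax/(qmin*mumax+y2) \<noteq> 0" using den pos by simp
    then show ?thesis unfolding Yeq e1 e2 by simp
  qed
  have psi2: "kv * Y d2 / (rhomax - Y d2) / K = s"
  proof -
    have e1: "rhomax - y2 = rhomax*kv/(kv + K * s)" using Ks by (simp add: y2_def field_simps)
    have e2: "kv*y2 = (K * s) * (rhomax*kv/(kv + K * s))" using Ks by (simp add: y2_def field_simps)
    have "rhomax*kv/(kv + K * s) \<noteq> 0" using Ks pos by simp
    then show ?thesis unfolding Yd2 e1 e2 using K by simp
  qed
  define ds where "ds = min d1 d2"
  have ds: "0 < ds" "ds < M" using d1 d2 d2PM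
    by (auto simp: ds_def M_def min_def)
  have gds: "s \<le> g ds"
  proof (cases "d1 \<le> d2")
    case True
    then have "ds = d1" by (simp add: ds_def)
    then have dd: "d1 < M" "0 \<le> d1" using ds by auto
    have "0 \<le> kv * Y d1 / (rhomax - Y d1) / K" using dom[OF dd(2) dd(1)] pos K by simp
    then show ?thesis using \<open>ds = d1\<close> phi1 by (simp add: geq)
  next
    case False
    then have "ds = d2" by (simp add: ds_def)
    then have dd: "d2 < M" "0 \<le> d2" using ds by auto
    have "0 \<le> ks * (d2/a) / (phimax - d2/a)" using dom[OF dd(2) dd(1)] pos a dd
      by (intro divide_nonneg_pos mult_nonneg_nonneg) auto
    then show ?thesis using \<open>ds = d2\<close> psi2 by (simp add: geq)
  qed
  have gcont: "continuous_on {0..ds} g"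
  proof -
    have "\<forall>d\<in>{0..ds}. phimax - d/a \<noteq> 0 \<and> mumax - d \<noteq> 0 \<and> rhomax - Y d \<noteq> 0"
      using dom ds by force
    then show ?thesis unfolding geq[abs_def] Y_def mu_inv_def using K a
      by (intro continuous_intros) auto
  qed
  obtain c where c: "0 \<le> c" "c \<le> ds" "g c = s"
    using IVT'[of g 0 s ds] h0 sp gds ds gcont by auto
  have cpos: "0 < c" using c h0 sp by (cases "c = 0") auto
  have cM: "c < M" using c ds by simp
  have Deq: "D = {0<..<c}"
  proof (intro set_eqI iffI)
    fix d assume "d \<in> D"
    then have d: "0 < d" "d < M" "g d < s"
      by (auto simp: D_def D_alpha_def M_def PM_def g_def s_def a_def)
    have "d < c" using gmono_le[of c d] d c by force
    then show "d \<in> {0<..<c}" using d by simp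
  next
    fix d assume "d \<in> {0<..<c}"
    then have d: "0 < d" "d < c" by auto
    have "g d < s" using gmono[of d c] d c cM by simp
    then show "d \<in> D" using d cM
      by (auto simp: D_def D_alpha_def M_def PM_def g_def s_def a_def)
  qed
  have part1: "\<exists>c. 0 < c \<and> c < min ((1 - alpha) * phimax) (psi_max rhomax qmin mumax) \<and>
              psi_alpha_inv gamma beta phimax ks rhomax kv qmin mumax alpha c = s_in \<and>
              D = {0<..<c}"
    using cpos cM c Deq by (auto simp: M_def PM_def a_def g_def s_def)
  have inD: "0 < d \<and> d < M \<and> g d < s" if "d \<in> D" for d
    using that Deq gmono[of d c] c cM by auto
  have mupos: "0 < mu_inv qmin mumax d" if "d \<in> D" for d
  proof -
    have "d < mumax" using dom[of d] inD[OF that] by auto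
    then show ?thesis using pos by (simp add: mu_inv_def)
  qed
  have feq: "f d = (s - g d) * (K * d / mu_inv qmin mumax d)" for d
  proof -
    have e: "(s - g d)*K = K*(s - phi_inv phimax ks (d/a)) - psi_inv rhomax kv qmin mumax d"
      using K unfolding g_def psi_alpha_inv_def K_def[symmetric] a_def[symmetric]
      by (simp add: field_simps)
    have "f d = d * (K*(s - phi_inv phimax ks (d/a)) - psi_inv rhomax kv qmin mumax d) / mu_inv qmin mumax d"
      unfolding f_def f0_star_def v_in_star_def K_def a_def s_def by simp
    then have "f d = d * ((s - g d)*K) / mu_inv qmin mumax d" by (simp only: e)
    then show ?thesis by simp
  qed
  have fpos: "0 < f d" if "d \<in> D" for d
    using inD[OF that] mupos[OF that] K by (simp add: feq)
  have part2: "\<forall>d\<in>D. f d = (s_in - psi_alpha_inv gamma beta phimax ks rhomax kv qmin mumax alpha d)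
                       * (alpha * beta * gamma * d / mu_inv qmin mumax d)
               \<and> 0 < f d"
    using feq fpos by (simp add: g_def s_def K_def)
  have gconv: "g ((1-t)*x+t*y) \<le> (1-t)*g x + t*g y"
    if "0 \<le> x" "x < M" "0 \<le> y" "y < M" "0 \<le> t" "t \<le> 1" for x y t
  proof -
    have dx: "x/a < phimax \<and> x < mumax \<and> 0 \<le> Y x \<and> Y x < rhomax" using dom that by simp
    have dy: "y/a < phimax \<and> y < mumax \<and> 0 \<le> Y y \<and> Y y < rhomax" using dom that by simp
    have za: "((1-t)*x+t*y)/a = (1-t)*(x/a)+t*(y/a)" by (simp add: add_divide_distrib diff_divide_distrib algebra_simps)
    have 1: "ks * (((1-t)*x+t*y)/a) / (phimax - ((1-t)*x+t*y)/a)
       \<le> (1-t)*(ks * (x/a) / (phimax - x/a)) + t*(ks * (y/a) / (phimax - y/a))"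
      unfolding za using h_conv[of ks "x/a" phimax "y/a" t] dx dy pos that by simp
    have Yz: "Y ((1-t)*x+t*y) \<le> (1-t)*Y x + t*Y y"
      unfolding Yeq using h_conv[of "qmin*mumax" x mumax y t] dx dy pos that by simp
    have cl: "(1-t)*Y x + t*Y y < rhomax" using conv_lt dx dy that by blast
    have "kv * Y ((1-t)*x+t*y) / (rhomax - Y ((1-t)*x+t*y))
       \<le> kv * ((1-t)*Y x + t*Y y) / (rhomax - ((1-t)*Y x + t*Y y))"
      using h_mono_le[OF _ Yz cl] pos by simp
    also have "\<dots> \<le> (1-t)*(kv * Y x / (rhomax - Y x)) + t*(kv * Y y / (rhomax - Y y))"
      using h_conv[of kv "Y x" rhomax "Y y" t] dx dy pos that by simp
    finally have 2: "kv * Y ((1-t)*x+t*y) / (rhomax - Y ((1-t)*x+t*y)) / K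
       \<le> ((1-t)*(kv * Y x / (rhomax - Y x)) + t*(kv * Y y / (rhomax - Y y))) / K"
      using K by (intro divide_right_mono) auto
    show ?thesis using 1 2 unfolding geq by (simp add: add_divide_distrib algebra_simps)
  qed
  have lnf: "ln (f d) = ln (s - g d) + ln d + ln (mumax - d) + ln (K/(qmin*mumax))" if "d \<in> D" for d
  proof -
    have d: "0 < d" "d < mumax" "g d < s" using inD[OF that] dom[of d] by auto
    have "f d = (s - g d) * d * (mumax - d) * (K/(qmin*mumax))"
      unfolding feq using pos d by (simp add: mu_inv_def field_simps)
    moreover have "0 < K/(qmin*mumax)" using K pos by simp
    moreover have "ln (A * B * Cm * Cc) = ln A + ln B + ln Cm + ln Cc"
      if "0 < A" "0 < B" "0 < Cm" "0 < Cc" for A B Cm Cc :: real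
      using that by (simp add: ln_mult)
    ultimately show ?thesis using d by (metis diff_gt_0_iff_gt)
  qed
  have part3: "strict_concave_on D (\<lambda>d. ln (f d))"
    unfolding strict_concave_on_def
  proof (intro ballI impI allI)
    fix x y :: real and t :: real assume xD: "x \<in> D" and yD: "y \<in> D" and xy: "x \<noteq> y" and t: "0 < t \<and> t < 1"
    define z where "z = (1-t)*x+t*y"
    have x: "0 < x" "x < c" and y: "0 < y" "y < c" using xD yD Deq by auto
    have zpos: "0 < z" unfolding z_def using x y t by (simp add: add_pos_pos)
    have zc: "z < c" unfolding z_def using conv_lt[of x c y t] x y t by simp
    have zD: "z \<in> D" using zpos zc Deq by simp
    have xm: "x < mumax" "y < mumax" using dom[of x] dom[of y] x y cM by auto
    have gx: "g x < s" "g y < s" using inD xD yD by auto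
    have "g z \<le> (1-t)*g x + t*g y" unfolding z_def using gconv[of x y t] x y t cM by simp
    then have sgz: "(1-t)*(s - g x) + t*(s - g y) \<le> s - g z" by (simp add: algebra_simps)
    have pc: "0 < (1-t)*(s - g x) + t*(s - g y)" using gx t by (simp add: add_pos_pos)
    have A: "(1-t)*ln (s - g x) + t*ln (s - g y) \<le> ln (s - g z)"
    proof -
      have "(1-t)*ln (s - g x) + t*ln (s - g y) \<le> ln ((1-t)*(s - g x) + t*(s - g y))"
        using ln_conc[of "s - g x" "s - g y" t] gx t by simp
      also have "\<dots> \<le> ln (s - g z)" using pc sgz by simp
      finally show ?thesis .
    qed
    have B: "(1-t)*ln x + t*ln y < ln z" unfolding z_def using ln_strict_conc[of x y t] x y xy t by simp
    have mz: "mumax - z = (1-t)*(mumax - x) + t*(mumax - y)" unfolding z_def by (simp add: algebra_simps)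
    have C: "(1-t)*ln (mumax - x) + t*ln (mumax - y) \<le> ln (mumax - z)"
      unfolding mz using ln_conc[of "mumax - x" "mumax - y" t] xm t by simp
    have "(1-t)*ln (f x) + t*ln (f y) < ln (f z)"
      unfolding lnf[OF xD] lnf[OF yD] lnf[OF zD] using A B C by (simp add: algebra_simps)
    then show "(1-t)*ln (f x) + t*ln (f y) < ln (f ((1-t)*x+t*y))" by (simp add: z_def)
  qed
  show ?thesis using part1 part2 part3 by blast
qed

end
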